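(* For every integer $n\geq1$ the function $$p_n(t)=\frac{1}{t^2}\sum_{k=1}^\infty(2\pi k)^{1-2n}\left(\frac{4\pi k}{t^2+(2\pi k)^2}+\frac{8\pi kt}{(t^2+(2\pi k)^2)^2}+\frac{2n-1}{2\pi k}\,\frac{2t}{t^2+(2\pi k)^2}\right),\qquad t>0,$$ is completely monotonic on $(0,\infty)$.
   Context: A function $g$ on $(0,\infty)$ is completely monotonic if it is $C^\infty$ and $(-1)^mg^{(m)}(t)\geq0$ for all $m\geq0$ and $t>0$. *)

theory Defs
  imports "HOL-Analysis.Analysis"
begin

definition completely_monotonic :: "(real \<Rightarrow> real) \<Rightarrow> bool" where
  "completely_monotonic g \<longleftrightarrow>
     (\<forall>m. \<forall>t>0. (deriv ^^ m) g differentiable (at t)) \<and>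
     (\<forall>m. \<forall>t>0. (-1) ^ m * (deriv ^^ m) g t \<ge> 0)"

definition p_fun :: "nat \<Rightarrow> real \<Rightarrow> real" where
  "p_fun n t = (1 / t\<^sup>2) * (\<Sum>j. let k = real (Suc j) in
      (2*pi*k) powi (1 - 2 * int n) *
      (4*pi*k / (t\<^sup>2 + (2*pi*k)\<^sup>2)
       + 8*pi*k*t / (t\<^sup>2 + (2*pi*k)\<^sup>2)\<^sup>2
       + (2 * real n - 1) / (2*pi*k) * (2*t / (t\<^sup>2 + (2*pi*k)\<^sup>2))))"

end

theory Submission
  imports Defs
begin

definition Ef :: "real \<Rightarrow> real \<Rightarrow> real \<Rightarrow> real \<Rightarrow> real \<Rightarrow> real \<Rightarrow> real \<Rightarrow> real \<Rightarrow> real" where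
 "Ef a q1 q2 q3 q4 q5 q6 x = q1 + q2 * x + q3 * sin(a * x) + q4 * cos(a * x) + q5 * x * sin(a * x) + q6 * x * cos(a * x)"

lemma Ef_deriv:
  "((\<lambda>x. exp(-t * x)  *  Ef a q1 q2 q3 q4 q5 q6 x) has_real_derivative
     exp(-t * x)  *  Ef a (-t * q1+q2) (-t * q2) (-t * q3 - a * q4 + q5) (-t * q4 + a * q3 + q6) (-t * q5 - a * q6) (-t * q6 + a * q5) x) (at x)"
  unfolding Ef_def
  by (rule derivative_eq_intros refl | simp)+ (simp add: algebra_simps)

definition J :: "(real \<Rightarrow> real) \<Rightarrow> real \<Rightarrow> nat \<Rightarrow> real" where
  "J g t j = integral {real j..real j + 1} (\<lambda>x. exp (- t * x) * g x)"

definition Lap :: "(real \<Rightarrow> real) \<Rightarrow> real \<Rightarrow> real" where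
  "Lap g t = (\<Sum>j. J g t j)"

lemma tri6: "\<bar>(A::real) + B + C + D + E + F\<bar> \<le> \<bar>A\<bar> + \<bar>B\<bar> + \<bar>C\<bar> + \<bar>D\<bar> + \<bar>E\<bar> + \<bar>F\<bar>"
  by (intro order_trans[OF abs_triangle_ineq] add_right_mono) simp

lemma Ef_bound:
  assumes "x \<ge> 0"
  shows "\<bar>Ef a q1 q2 q3 q4 q5 q6 x\<bar> \<le> (\<bar>q1\<bar> + \<bar>q3\<bar> + \<bar>q4\<bar>) + (\<bar>q2\<bar> + \<bar>q5\<bar> + \<bar>q6\<bar>) * x"
proof -
  have s: "\<bar>sin (a * x)\<bar> \<le> 1" "\<bar>cos (a * x)\<bar> \<le> 1" by auto
  have 3: "\<bar>q3 * sin(a * x)\<bar> \<le> \<bar>q3\<bar>" using s by (simp add: abs_mult mult_left_le)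
  have 4: "\<bar>q4 * cos(a * x)\<bar> \<le> \<bar>q4\<bar>" using s by (simp add: abs_mult mult_left_le)
  have 5: "\<bar>q5 * x * sin(a * x)\<bar> \<le> \<bar>q5\<bar> * x" using s assms by (simp add: abs_mult mult_left_le)
  have 6: "\<bar>q6 * x * cos(a * x)\<bar> \<le> \<bar>q6\<bar> * x" using s assms by (simp add: abs_mult mult_left_le)
  have 2: "\<bar>q2 * x\<bar> = \<bar>q2\<bar> * x" using assms by (simp add: abs_mult)
  have T: "\<bar>Ef a q1 q2 q3 q4 q5 q6 x\<bar> \<le> \<bar>q1\<bar> + \<bar>q2 * x\<bar> + \<bar>q3 * sin(a * x)\<bar> + \<bar>q4 * cos(a * x)\<bar> + \<bar>q5 * x * sin(a * x)\<bar> + \<bar>q6 * x * cos(a * x)\<bar>"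
    unfolding Ef_def by (rule tri6)
  have "\<bar>q1\<bar> + \<bar>q2 * x\<bar> + \<bar>q3 * sin(a * x)\<bar> + \<bar>q4 * cos(a * x)\<bar> + \<bar>q5 * x * sin(a * x)\<bar> + \<bar>q6 * x * cos(a * x)\<bar>
     \<le> (\<bar>q1\<bar> + \<bar>q3\<bar> + \<bar>q4\<bar>) + (\<bar>q2\<bar> + \<bar>q5\<bar> + \<bar>q6\<bar>) * x"
    using 2 3 4 5 6 by (simp add: algebra_simps)
  with T show ?thesis by linarith
qed

lemma exp_lin_lim:
  assumes "t > 0"
  shows "(\<lambda>n::nat. exp (- t * real n) * (K0 + K1 * real n)) \<longlonglongrightarrow> 0"
proof -
  have e: "exp (- t * real n) = exp (-t) ^ n" for n
    by (metis exp_of_nat_mult mult.commute mult_minus_left)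
  have nr: "norm (exp (-t)) < 1" using assms by simp
  have "(\<lambda>n. exp (-t) ^ n) \<longlonglongrightarrow> 0"
    using nr by (intro LIMSEQ_power_zero) auto
  moreover have "(\<lambda>n. real n * exp (-t) ^ n) \<longlonglongrightarrow> 0"
    using powser_times_n_limit_0[OF nr] by simp
  ultimately have "(\<lambda>n. K0 * exp (-t) ^ n + K1 * (real n * exp (-t) ^ n)) \<longlonglongrightarrow> K0 * 0 + K1 * 0"
    by (intro tendsto_add tendsto_mult tendsto_const)
  moreover have "(\<lambda>n. exp (-t * real n) * (K0 + K1 * real n)) = (\<lambda>n. K0 * exp (-t) ^ n + K1 * (real n * exp (-t) ^ n))"
    by (rule ext, unfold e) (simp add: algebra_simps)
  ultimately show ?thesis by simp
qed

lemma Ef_sums: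
  fixes t a g1 g2 g3 g4 g5 g6 :: real
  assumes t: "t > 0"
  and D_def: "D = t\<^sup>2 + a\<^sup>2"
  and q5_def: "q5 = (-t * g5 + a * g6) / D" and q6_def: "q6 = (-a * g5 - t * g6) / D"
  and q3_def: "q3 = (-t * (g3 - q5) + a * (g4 - q6)) / D" and q4_def: "q4 = (-a * (g3 - q5) - t * (g4 - q6)) / D"
  and q2_def: "q2 = - g2 / t" and q1_def: "q1 = (q2 - g1) / t"
  shows "(\<lambda>j. J (Ef a g1 g2 g3 g4 g5 g6) t j) sums (- (q1 + q4))"
proof -
  have D: "D > 0" unfolding D_def using t by (simp add: add_pos_nonneg)
  have c1: "-t*q1+q2 = g1" "-t*q2 = g2" unfolding q1_def q2_def using t by (auto simp: field_simps)
  have c5: "-t*q5 - a*q6 = g5" "-t*q6 + a*q5 = g6"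
    unfolding q5_def q6_def using D by (simp_all add: field_simps, simp_all add: D_def power2_eq_square algebra_simps)
  have c3: "-t*q3 - a*q4 + q5 = g3" "-t*q4 + a*q3 + q6 = g4"
    unfolding q3_def q4_def using D by (simp_all add: field_simps, simp_all add: D_def power2_eq_square algebra_simps)
  define A where "A x = exp (- t * x) * Ef a q1 q2 q3 q4 q5 q6 x" for x
  have dA: "(A has_real_derivative exp (- t * x) * Ef a g1 g2 g3 g4 g5 g6 x) (at x)" for x
    using Ef_deriv[of t a q1 q2 q3 q4 q5 q6 x] unfolding A_def c1 c3 c5 .
  have Jeq: "J (Ef a g1 g2 g3 g4 g5 g6) t j = A (real (Suc j)) - A (real j)" for j
  proof -
    have "((\<lambda>x. exp (- t * x) * Ef a g1 g2 g3 g4 g5 g6 x) has_integral (A (real j + 1) - A (real j))) {real j..real j + 1}"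
      apply (rule fundamental_theorem_of_calculus)
     apply simp
    apply (subst has_real_derivative_iff_has_vector_derivative[symmetric])
    apply (rule has_field_derivative_at_within[OF dA])
    done
    then show ?thesis unfolding J_def by (simp add: integral_unique add.commute)
  qed
  have lim: "(\<lambda>n. A (real n)) \<longlonglongrightarrow> 0"
  proof (rule Lim_null_comparison)
    show "\<forall>\<^sub>F n in sequentially. norm (A (real n)) \<le> exp (- t * real n) * ((\<bar>q1\<bar> + \<bar>q3\<bar> + \<bar>q4\<bar>) + (\<bar>q2\<bar> + \<bar>q5\<bar> + \<bar>q6\<bar>) * real n)"
      unfolding A_def using Ef_bound by (auto simp: abs_mult intro!: mult_left_mono)
    show "(\<lambda>n. exp (- t * real n) * ((\<bar>q1\<bar> + \<bar>q3\<bar> + \<bar>q4\<bar>) + (\<bar>q2\<bar> + \<bar>q5\<bar> + \<bar>q6\<bar>) * real n)) \<longlonglongrightarrow> 0"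
      by (rule exp_lin_lim[OF t])
  qed
  have "(\<lambda>n. A (real (Suc n)) - A (real n)) sums (0 - A (real 0))"
    using telescope_sums[OF lim] .
  moreover have "A (real 0) = q1 + q4" unfolding A_def Ef_def by simp
  ultimately show ?thesis unfolding Jeq by simp
qed

lemma J_deriv:
  assumes g: "continuous_on {0..} g"
  shows "((\<lambda>t. J g t j) has_real_derivative - J (\<lambda>x. x * g x) t j) (at t)"
proof -
  have sub: "cbox (real j) (real j + 1) \<subseteq> {0..}" by auto
  have gc: "continuous_on (cbox (real j) (real j + 1)) g" using continuous_on_subset[OF g sub] .
  have cfx: "continuous_on (UNIV \<times> cbox (real j) (real j + 1)) (\<lambda>(t, x). - x * exp (- t * x) * g x)"
  proof -
    have 1: "continuous_on (UNIV \<times> cbox (real j) (real j + 1)) (\<lambda>z. - snd z * exp (- fst z * snd z))"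
      by (intro continuous_intros)
    have 2: "continuous_on (UNIV \<times> cbox (real j) (real j + 1)) (\<lambda>z. g (snd z))"
      by (rule continuous_on_compose2[OF gc continuous_on_snd]) auto
    have "continuous_on (UNIV \<times> cbox (real j) (real j + 1)) (\<lambda>z. - snd z * exp (- fst z * snd z) * g (snd z))"
      by (rule continuous_on_mult[OF 1 2])
    then show ?thesis by (simp add: case_prod_beta)
  qed
  have "((\<lambda>t. integral (cbox (real j) (real j + 1)) (\<lambda>x. exp (- t * x) * g x)) has_field_derivative
          integral (cbox (real j) (real j + 1)) (\<lambda>x. - x * exp (- t * x) * g x)) (at t within UNIV)"
  proof (rule leibniz_rule_field_derivative[where fx = "\<lambda>t x. - x * exp (- t * x) * g x"])
    show "((\<lambda>t. exp (- t * x) * g x) has_field_derivative - x * exp (- t * x) * g x) (at t within UNIV)" for t x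
      by (auto intro!: derivative_eq_intros)
    show "(\<lambda>x. exp (- t * x) * g x) integrable_on cbox (real j) (real j + 1)" for t
      by (intro integrable_continuous continuous_intros gc)
    show "continuous_on (UNIV \<times> cbox (real j) (real j + 1)) (\<lambda>(t, x). - x * exp (- t * x) * g x)" by (rule cfx)
  qed simp_all
  moreover have "integral (cbox (real j) (real j + 1)) (\<lambda>x. - x * exp (- t * x) * g x) = - J (\<lambda>x. x * g x) t j"
  proof -
    have "(\<lambda>x. - x * exp (- t * x) * g x) = (\<lambda>x. - (exp (- t * x) * (x * g x)))" by (rule ext) simp
    then show ?thesis unfolding J_def cbox_interval by (simp only: integral_neg)
  qed
  ultimately show ?thesis unfolding J_def cbox_interval by simp
qed

lemma pow_exp_bound:
  fixes x s :: real
  assumes "x \<ge> 0" "s > 0"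
  shows "x ^ k \<le> fact k / s ^ k * exp (s * x)"
proof -
  have "(s * x) ^ k / fact k \<le> exp (s * x)"
  proof -
    have sm: "summable (\<lambda>n. (s * x) ^ n /\<^sub>R fact n)" by (rule summable_exp_generic)
    have "sum (\<lambda>n. (s * x) ^ n /\<^sub>R fact n) {k} \<le> (\<Sum>n. (s * x) ^ n /\<^sub>R fact n)"
      by (rule sum_le_suminf[OF sm]) (use assms in auto)
    then show ?thesis by (simp add: exp_def divide_inverse mult.commute)
  qed
  then have "s ^ k * x ^ k \<le> fact k * exp (s * x)"
    by (simp add: power_mult_distrib field_simps)
  then show ?thesis using assms by (simp add: field_simps)
qed

definition Wc :: "nat \<Rightarrow> real \<Rightarrow> real" where
  "Wc m t0 = fact m / (t0/2) ^ m + fact (Suc m) / (t0/2) ^ Suc m"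

lemma J_bound:
  assumes g: "continuous_on {0..} g" and gb: "\<And>x. x \<ge> 0 \<Longrightarrow> \<bar>g x\<bar> \<le> B * (1 + x)"
    and t0: "t0 > 0" and tt: "t0 \<le> t"
  shows "\<bar>J (\<lambda>x. x ^ m * g x) t j\<bar> \<le> B * Wc m t0 * exp (- (t0/2)) ^ j"
proof -
  define s where "s = t0 / 2"
  have s: "s > 0" unfolding s_def using t0 by simp
  have B: "B \<ge> 0" using gb[of 0] by auto
  have W: "Wc m t0 \<ge> 0" unfolding Wc_def using t0 by simp
  have pt: "\<bar>exp (- t * x) * (x ^ m * g x)\<bar> \<le> B * Wc m t0 * exp (- (t0/2)) ^ j"
    if x: "x \<in> {real j..real j + 1}" for x
  proof -
    have x0: "x \<ge> 0" using x by auto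
    have e1: "exp (- t * x) \<le> exp (- t0 * x)" using x0 tt by (simp add: mult_right_mono)
    have p: "x ^ m + x ^ Suc m \<le> Wc m t0 * exp (s * x)"
      using pow_exp_bound[OF x0 s, of m] pow_exp_bound[OF x0 s, of "Suc m"]
      unfolding Wc_def s_def by (simp add: algebra_simps)
    have "\<bar>exp (- t * x) * (x ^ m * g x)\<bar> = exp (- t * x) * x ^ m * \<bar>g x\<bar>"
      using x0 by (simp add: abs_mult)
    also have "\<dots> \<le> exp (- t0 * x) * x ^ m * (B * (1 + x))"
      using e1 gb[OF x0] x0 by (intro mult_mono) auto
    also have "\<dots> = B * (exp (- t0 * x) * (x ^ m + x ^ Suc m))" by (simp add: algebra_simps)
    also have "\<dots> \<le> B * (exp (- t0 * x) * (Wc m t0 * exp (s * x)))"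
      using p B by (intro mult_left_mono) auto
    also have "\<dots> = B * Wc m t0 * exp (- s * x)"
    proof -
      have "exp (- t0 * x) * exp (s * x) = exp (- s * x)"
        unfolding exp_add[symmetric] s_def by (simp add: algebra_simps)
      then show ?thesis by (simp add: algebra_simps)
    qed
    also have "\<dots> \<le> B * Wc m t0 * exp (- s * real j)"
      using x s B W by (intro mult_left_mono) (auto simp: mult_nonneg_nonneg)
    also have "exp (- s * real j) = exp (- (t0/2)) ^ j"
      unfolding s_def by (metis exp_of_nat_mult mult.commute mult_minus_left)
    finally show ?thesis .
  qed
  have "norm (integral {real j..real j + 1} (\<lambda>x. exp (- t * x) * (x ^ m * g x))) \<le> B * Wc m t0 * exp (- (t0/2)) ^ j * (real j + 1 - real j)"
    apply (rule integral_bound)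
      apply simp
     apply (intro continuous_intros continuous_on_subset[OF g]) apply force
    apply (simp only: real_norm_def)
    apply (erule pt)
    done
  then show ?thesis unfolding J_def by simp
qed

lemma geo_summable:
  fixes t0 C :: real
  assumes "t0 > 0"
  shows "summable (\<lambda>j. C * exp (- (t0/2)) ^ j)"
  using assms by (intro summable_mult summable_geometric) simp

lemma series_deriv:
  fixes f f' :: "nat \<Rightarrow> real \<Rightarrow> real"
  assumes d: "\<And>i x. x > 0 \<Longrightarrow> (f i has_real_derivative f' i x) (at x)"
    and bf: "\<And>t0. t0 > 0 \<Longrightarrow> \<exists>M. summable M \<and> (\<forall>i x. x \<ge> t0 \<longrightarrow> \<bar>f i x\<bar> \<le> M i)"
    and bf': "\<And>t0. t0 > 0 \<Longrightarrow> \<exists>M. summable M \<and> (\<forall>i x. x \<ge> t0 \<longrightarrow> \<bar>f' i x\<bar> \<le> M i)"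
    and t: "t > 0"
  shows "((\<lambda>x. \<Sum>i. f i x) has_real_derivative (\<Sum>i. f' i t)) (at t)"
proof -
  obtain M where M: "summable M" "\<And>i x. x \<ge> t/2 \<Longrightarrow> \<bar>f i x\<bar> \<le> M i" using bf[of "t/2"] t by auto
  obtain M' where M': "summable M'" "\<And>i x. x \<ge> t/2 \<Longrightarrow> \<bar>f' i x\<bar> \<le> M' i" using bf'[of "t/2"] t by auto
  have "summable (\<lambda>i. f i t)"
  proof (rule summable_comparison_test[OF _ M(1)])
    show "\<exists>N. \<forall>n\<ge>N. norm (f n t) \<le> M n" using M(2)[of t] t by auto
  qed
  show ?thesis
  proof (rule has_field_derivative_series'(2)[of "{t/2..}"])
    show "convex {t/2..}" by (simp add: convex_real_interval)
    show "(f i has_field_derivative f' i x) (at x within {t/2..})" if "x \<in> {t/2..}" for i x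
    proof -
      have "x > 0" using that t by simp
      then show ?thesis by (rule has_field_derivative_at_within[OF d])
    qed
    show "uniformly_convergent_on {t/2..} (\<lambda>n x. \<Sum>i<n. f' i x)"
    proof (rule Weierstrass_m_test'[OF _ M'(1)])
      show "norm (f' n x) \<le> M' n" if "x \<in> {t/2..}" for n x using M'(2)[of x n] that by simp
    qed
    show "t \<in> {t/2..}" using t by simp
    show "summable (\<lambda>n. f n t)" by fact
    show "t \<in> interior {t/2..}" using t by (simp add: interior_real_atLeast)
  qed
qed

context
  fixes g :: "real \<Rightarrow> real" and B :: real
  assumes g: "continuous_on {0..} g" and gb: "\<And>x. x \<ge> 0 \<Longrightarrow> \<bar>g x\<bar> \<le> B * (1 + x)"
begin

lemma gm_cont: "continuous_on {0..} (\<lambda>x. x ^ m * g x)"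
  by (intro continuous_intros g)

lemma J_summable:
  assumes t: "t > 0"
  shows "summable (\<lambda>j. J (\<lambda>x. x ^ m * g x) t j)"
proof (rule summable_comparison_test[OF _ geo_summable[OF t, of "B * Wc m t"]])
  show "\<exists>N. \<forall>n\<ge>N. norm (J (\<lambda>x. x ^ m * g x) t n) \<le> B * Wc m t * exp (- (t / 2)) ^ n"
    using J_bound[OF g gb t order.refl] by auto
qed

lemma J_bnd_ex:
  assumes t0: "t0 > 0"
  shows "\<exists>M. summable M \<and> (\<forall>j x. x \<ge> t0 \<longrightarrow> \<bar>J (\<lambda>x. x ^ m * g x) x j\<bar> \<le> M j)"
  using J_bound[OF g gb t0] geo_summable[OF t0, of "B * Wc m t0"] by blast

lemma Lap_deriv:
  assumes t: "t > 0"
  shows "(Lap (\<lambda>x. x ^ m * g x) has_real_derivative - Lap (\<lambda>x. x ^ Suc m * g x) t) (at t)"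
proof -
  have e: "(\<lambda>x. x * (x ^ m * g x)) = (\<lambda>x. x ^ Suc m * g x)" by (rule ext) (simp add: mult.assoc)
  have d: "((\<lambda>t. J (\<lambda>x. x ^ m * g x) t j) has_real_derivative - J (\<lambda>x. x ^ Suc m * g x) t j) (at t)" for t j
    using J_deriv[OF gm_cont, of m j t] unfolding e .
  have "((\<lambda>x. \<Sum>i. J (\<lambda>x. x ^ m * g x) x i) has_real_derivative (\<Sum>i. - J (\<lambda>x. x ^ Suc m * g x) t i)) (at t)"
  proof (rule series_deriv[OF d _ _ t])
    show "\<exists>M. summable M \<and> (\<forall>i x. x \<ge> t0 \<longrightarrow> \<bar>J (\<lambda>x. x ^ m * g x) x i\<bar> \<le> M i)" if "t0 > 0" for t0
      using J_bnd_ex[OF that] .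
    show "\<exists>M. summable M \<and> (\<forall>i x. x \<ge> t0 \<longrightarrow> \<bar>- J (\<lambda>x. x ^ Suc m * g x) x i\<bar> \<le> M i)" if "t0 > 0" for t0
      using J_bnd_ex[OF that, of "Suc m"] by simp
  qed
  moreover have "(\<Sum>i. - J (\<lambda>x. x ^ Suc m * g x) t i) = - Lap (\<lambda>x. x ^ Suc m * g x) t"
    unfolding Lap_def by (rule suminf_minus[OF J_summable[OF t]])
  moreover have "Lap (\<lambda>x. x ^ m * g x) = (\<lambda>x. \<Sum>i. J (\<lambda>x. x ^ m * g x) x i)"
    unfolding Lap_def by (rule ext) simp
  ultimately show ?thesis by simp
qed

lemma Lap_bound:
  assumes t0: "t0 > 0" and tt: "t0 \<le> t"
  shows "\<bar>Lap (\<lambda>x. x ^ m * g x) t\<bar> \<le> B * (Wc m t0 / (1 - exp (- (t0/2))))"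
proof -
  have t: "t > 0" using t0 tt by simp
  have r: "norm (exp (- (t0/2))) < 1" using t0 by simp
  have sg: "(\<lambda>j. B * Wc m t0 * exp (- (t0/2)) ^ j) sums (B * Wc m t0 * (1 / (1 - exp (- (t0/2)))))"
    by (rule sums_mult[OF geometric_sums[OF r]])
  have sg': "(\<lambda>j. - (B * Wc m t0 * exp (- (t0/2)) ^ j)) sums (- (B * Wc m t0 * (1 / (1 - exp (- (t0/2))))))"
    by (rule sums_minus[OF sg])
  have sJ: "summable (\<lambda>j. J (\<lambda>x. x ^ m * g x) t j)" by (rule J_summable[OF t])
  have b: "\<bar>J (\<lambda>x. x ^ m * g x) t j\<bar> \<le> B * Wc m t0 * exp (- (t0/2)) ^ j" for j
    by (rule J_bound[OF g gb t0 tt])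
  have b2: "- (B * Wc m t0 * exp (- (t0/2)) ^ j) \<le> J (\<lambda>x. x ^ m * g x) t j"
    and b3: "J (\<lambda>x. x ^ m * g x) t j \<le> B * Wc m t0 * exp (- (t0/2)) ^ j" for j
    using b[of j] unfolding abs_le_iff by linarith+
  have "Lap (\<lambda>x. x ^ m * g x) t \<le> B * Wc m t0 * (1 / (1 - exp (- (t0/2))))"
    unfolding Lap_def by (rule sums_le[OF b3 summable_sums[OF sJ] sg])
  moreover have "- (B * Wc m t0 * (1 / (1 - exp (- (t0/2))))) \<le> Lap (\<lambda>x. x ^ m * g x) t"
    unfolding Lap_def by (rule sums_le[OF b2 sg' summable_sums[OF sJ]])
  ultimately show ?thesis by (simp add: abs_le_iff)
qed

lemma Lap_nonneg:
  assumes t: "t > 0" and pos: "\<And>x. x \<ge> 0 \<Longrightarrow> g x \<ge> 0"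
  shows "Lap (\<lambda>x. x ^ m * g x) t \<ge> 0"
  unfolding Lap_def
proof (rule suminf_nonneg[OF J_summable[OF t]])
  fix j
  show "0 \<le> J (\<lambda>x. x ^ m * g x) t j"
    unfolding J_def
  proof (rule integral_nonneg)
    show "(\<lambda>x. exp (- t * x) * (x ^ m * g x)) integrable_on {real j..real j + 1}"
      by (auto intro!: integrable_continuous_interval continuous_intros continuous_on_subset[OF g])
    fix x assume "x \<in> {real j..real j + 1}"
    then have x: "x \<ge> 0" by auto
    show "0 \<le> exp (- t * x) * (x ^ m * g x)" using x pos[OF x] by simp
  qed
qed

end

lemma k_nonneg:
  fixes y :: real assumes "0 \<le> y" "y \<le> pi"
  shows "0 \<le> 2 * sin y - y * cos y"
proof (cases "y \<le> pi/2")
  case True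
  have "2 * sin 0 - 0 * cos 0 \<le> 2 * sin y - y * cos y"
  proof (rule DERIV_nonneg_imp_nondecreasing[OF assms(1)])
    fix x assume x: "0 \<le> x" "x \<le> y"
    have "DERIV (\<lambda>y. 2 * sin y - y * cos y) x :> (cos x + x * sin x)"
      by (rule derivative_eq_intros refl | simp)+
    moreover have "cos x + x * sin x \<ge> 0"
      using x True assms by (intro add_nonneg_nonneg cos_ge_zero mult_nonneg_nonneg sin_ge_zero) auto
    ultimately show "\<exists>d. DERIV (\<lambda>y. 2 * sin y - y * cos y) x :> d \<and> d \<ge> 0" by blast
  qed
  then show ?thesis by simp
next
  case False
  have "cos (pi - y) \<ge> 0" using False assms by (intro cos_ge_zero) auto
  then have "cos y \<le> 0" by (simp add: cos_diff)
  moreover have "sin y \<ge> 0" using assms by (intro sin_ge_zero) auto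
  moreover have "y * cos y \<le> 0" using calculation assms by (simp add: mult_nonneg_nonpos)
  ultimately show ?thesis by linarith
qed

lemma h_nonneg:
  fixes y :: real assumes "0 \<le> y" "y \<le> pi"
  shows "y * sin y \<le> 3 * (1 - cos y)"
proof -
  have "3 - 3 * cos 0 - 0 * sin 0 \<le> 3 - 3 * cos y - y * sin y"
  proof (rule DERIV_nonneg_imp_nondecreasing[OF assms(1)])
    fix x assume x: "0 \<le> x" "x \<le> y"
    have "DERIV (\<lambda>y. 3 - 3 * cos y - y * sin y) x :> (2 * sin x - x * cos x)"
      by (rule derivative_eq_intros refl | simp)+
    moreover have "2 * sin x - x * cos x \<ge> 0" using x assms by (intro k_nonneg) auto
    ultimately show "\<exists>d. DERIV (\<lambda>y. 3 - 3 * cos y - y * sin y) x :> d \<and> d \<ge> 0" by blast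
  qed
  then show ?thesis by simp
qed

lemma core_ineq:
  fixes y a N :: real
  assumes y: "y \<ge> 0" and a: "a \<ge> 2 * pi" and N: "N \<ge> 3"
  shows "0 \<le> a * (y - sin y) - y * sin y + N * (1 - cos y)"
proof (cases "y \<le> pi")
  case True
  have "y * sin y \<le> 3 * (1 - cos y)" using h_nonneg[OF y True] .
  also have "\<dots> \<le> N * (1 - cos y)" using N by (intro mult_right_mono) auto
  finally have 1: "y * sin y \<le> N * (1 - cos y)" .
  have "sin y \<le> y" using sin_x_le_x[OF y] .
  moreover have "a \<ge> 0" using a pi_gt_zero by linarith
  ultimately have "a * (y - sin y) \<ge> 0" by simp
  with 1 show ?thesis by linarith
next
  case False
  have s1: "sin y \<le> 1" by simp
  have "y * sin y \<le> y" using y s1 mult_left_mono[OF s1 y] by simp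
  moreover have "a * (y - sin y) \<ge> 2 * pi * (y - 1)"
  proof -
    have "y - sin y \<ge> y - 1" using s1 by linarith
    moreover have "y - 1 \<ge> 0" using False pi_gt3 by linarith
    ultimately show ?thesis using a by (meson dual_order.trans mult_mono pi_ge_zero zero_le_mult_iff order.refl mult_nonneg_nonneg
          mult_right_mono order_trans le_diff_eq zero_le_numeral)
  qed
  moreover have "2 * pi * (y - 1) \<ge> y"
  proof -
    have "(2 * pi - 1) * y \<ge> (2 * pi - 1) * pi" using False pi_gt3 by (intro mult_left_mono) auto
    moreover have "(2 * pi - 1) * pi \<ge> 2 * pi" using pi_gt3 by (simp add: algebra_simps)
    ultimately have "(2 * pi - 1) * y \<ge> 2 * pi" by linarith
    moreover have "2 * pi * (y - 1) - y = (2 * pi - 1) * y - 2 * pi" by (simp add: algebra_simps)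
    ultimately show ?thesis by linarith
  qed
  moreover have "N * (1 - cos y) \<ge> 0" using N by simp
  ultimately show ?thesis by linarith
qed

lemma lap_alg:
  fixes a t c N :: real
  assumes a: "a > 0" and t: "t > 0"
  defines "D \<equiv> t\<^sup>2 + a\<^sup>2"
  shows "- ((- (c * (2 / a)) / t - c * ((4 * N + 2) / a ^ 3)) / t
           + (- a * (c * (- 2 / a\<^sup>2) - (- t * (c * (- 2 / a\<^sup>2)) + a * 0) / D)
              - t * (- (c * ((4 * N + 2) / a ^ 3)) - (- a * (c * (- 2 / a\<^sup>2)) - t * 0) / D)) / D)
       = c * (2 * a / (t\<^sup>2 + a\<^sup>2) + 4 * a * t / (t\<^sup>2 + a\<^sup>2)\<^sup>2 + (2 * N - 1) / a * (2 * t / (t\<^sup>2 + a\<^sup>2))) / t\<^sup>2"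
proof -
  have D: "D > 0" unfolding D_def using t by (simp add: add_pos_nonneg)
  show ?thesis unfolding D_def[symmetric] using a t D
    apply (simp add: field_simps)
    apply (unfold D_def)
    apply algebra
    done
qed

definition aa :: "nat \<Rightarrow> real" where "aa j = 2 * pi * real (Suc j)"
definition cc :: "nat \<Rightarrow> nat \<Rightarrow> real" where "cc n j = aa j powi (1 - 2 * int n)"
definition gg :: "nat \<Rightarrow> nat \<Rightarrow> real \<Rightarrow> real" where
  "gg n j = Ef (aa j) (cc n j * ((4 * real n + 2) / aa j ^ 3)) (cc n j * (2 / aa j))
     (cc n j * (- 2 / (aa j)\<^sup>2)) (- (cc n j * ((4 * real n + 2) / aa j ^ 3))) (cc n j * (- 2 / (aa j)\<^sup>2)) 0"
definition sm :: "nat \<Rightarrow> real \<Rightarrow> nat \<Rightarrow> real" where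
  "sm n t j = (let k = real (Suc j) in
      (2*pi*k) powi (1 - 2 * int n) *
      (4*pi*k / (t\<^sup>2 + (2*pi*k)\<^sup>2)
       + 8*pi*k*t / (t\<^sup>2 + (2*pi*k)\<^sup>2)\<^sup>2
       + (2 * real n - 1) / (2*pi*k) * (2*t / (t\<^sup>2 + (2*pi*k)\<^sup>2))))"

lemma p_fun_sm: "p_fun n t = (1 / t\<^sup>2) * (\<Sum>j. sm n t j)"
  unfolding p_fun_def sm_def ..

lemma aa_ge: "aa j \<ge> 2 * pi" "aa j > 0" "aa j \<ge> real (Suc j)" "aa j \<ge> 1"
proof -
  show "aa j \<ge> 2 * pi" unfolding aa_def by simp
  then show "aa j > 0" using pi_gt_zero by linarith
  have "1 \<le> 2 * pi" using pi_gt3 by simp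
  from mult_right_mono[OF this, of "real (Suc j)"]
  have "real (Suc j) \<le> 2 * pi * real (Suc j)" by simp
  then show "aa j \<ge> real (Suc j)" unfolding aa_def .
  then show "aa j \<ge> 1" by simp
qed

lemma cc_pos: "cc n j > 0"
  unfolding cc_def using aa_ge(2) by simp

lemma cc_le:
  assumes "n \<ge> 1"
  shows "cc n j \<le> 1 / aa j"
proof -
  have "1 - 2 * int n < 0" using assms by simp
  then have "cc n j = inverse (aa j) ^ nat (- (1 - 2 * int n))"
    unfolding cc_def power_int_def by simp
  also have "\<dots> \<le> inverse (aa j) ^ 1"
  proof (rule power_decreasing)
    show "inverse (aa j) \<le> 1" using aa_ge(4)[of j] by (simp add: inverse_le_1_iff)
  qed (use assms aa_ge(2)[of j] in auto)
  finally show ?thesis by (simp add: divide_inverse)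
qed

lemma sm_eq:
  assumes t: "t > 0"
  shows "sm n t j = cc n j * (2 * aa j / (t\<^sup>2 + (aa j)\<^sup>2) + 4 * aa j * t / (t\<^sup>2 + (aa j)\<^sup>2)\<^sup>2
           + (2 * real n - 1) / aa j * (2 * t / (t\<^sup>2 + (aa j)\<^sup>2)))"
  unfolding sm_def cc_def aa_def Let_def by (simp add: algebra_simps)

lemma Lap_gg:
  assumes t: "t > 0"
  shows "(\<lambda>i. J (gg n j) t i) sums (sm n t j / t\<^sup>2)"
proof -
  define a where "a = aa j"
  define c where "c = cc n j"
  have a: "a > 0" unfolding a_def by (rule aa_ge)
  have "(\<lambda>i. J (gg n j) t i) sums
     (- ((- (c * (2 / a)) / t - c * ((4 * real n + 2) / a ^ 3)) / t
           + (- a * (c * (- 2 / a\<^sup>2) - (- t * (c * (- 2 / a\<^sup>2)) + a * 0) / (t\<^sup>2 + a\<^sup>2))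
              - t * (- (c * ((4 * real n + 2) / a ^ 3)) - (- a * (c * (- 2 / a\<^sup>2)) - t * 0) / (t\<^sup>2 + a\<^sup>2))) / (t\<^sup>2 + a\<^sup>2)))"
    unfolding gg_def a_def[symmetric] c_def[symmetric]
    by (rule Ef_sums[OF t refl refl refl refl refl refl refl])
  also have "(- ((- (c * (2 / a)) / t - c * ((4 * real n + 2) / a ^ 3)) / t
           + (- a * (c * (- 2 / a\<^sup>2) - (- t * (c * (- 2 / a\<^sup>2)) + a * 0) / (t\<^sup>2 + a\<^sup>2))
              - t * (- (c * ((4 * real n + 2) / a ^ 3)) - (- a * (c * (- 2 / a\<^sup>2)) - t * 0) / (t\<^sup>2 + a\<^sup>2))) / (t\<^sup>2 + a\<^sup>2)))
     = sm n t j / t\<^sup>2"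
    unfolding sm_eq[OF t] a_def[symmetric] c_def[symmetric]
    using lap_alg[OF a t, of c "real n"] by simp
  finally show ?thesis .
qed

lemma gg_cont: "continuous_on {0..} (gg n j)"
  unfolding gg_def Ef_def by (intro continuous_intros)

definition Bg :: "nat \<Rightarrow> nat \<Rightarrow> real" where "Bg n j = (8 * real n + 10) / (real (Suc j))\<^sup>2"

lemma Bg_summable: "summable (Bg n)"
proof -
  have "summable (\<lambda>j. inverse (real j ^ 2))" by (rule inverse_power_summable) simp
  then have "summable (\<lambda>j. inverse (real (Suc j) ^ 2))" by (subst summable_Suc_iff)
  then have "summable (\<lambda>j. (8 * real n + 10) * inverse (real (Suc j) ^ 2))" by (rule summable_mult)
  then show ?thesis unfolding Bg_def by (simp add: divide_inverse)
qed

lemma gg_bound: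
  assumes n: "n \<ge> 1" and x: "x \<ge> 0"
  shows "\<bar>gg n j x\<bar> \<le> Bg n j * (1 + x)"
proof -
  define a where "a = aa j"
  define c where "c = cc n j"
  define u where "u = 1 / a\<^sup>2"
  have a: "a > 0" "a \<ge> 1" "a \<ge> real (Suc j)" unfolding a_def using aa_ge by auto
  have c: "c > 0" "c \<le> 1 / a" unfolding c_def a_def using cc_pos cc_le[OF n] by auto
  have c1: "c \<le> 1" using c a by (meson divide_le_eq_1 less_le_not_le order_trans)
  have u: "u \<le> 1 / (real (Suc j))\<^sup>2" unfolding u_def using a
    by (intro divide_left_mono power_mono) auto
  have u0: "u \<ge> 0" unfolding u_def by simp
  have b1: "c / a \<le> u" unfolding u_def using c a by (simp add: field_simps power2_eq_square)
  have b2: "c / a\<^sup>2 \<le> u" unfolding u_def using c1 a by (simp add: divide_right_mono)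
  have b3: "c / a ^ 3 \<le> u"
  proof -
    have "c / a ^ 3 \<le> 1 / a ^ 3" using c1 a by (simp add: divide_right_mono)
    also have "\<dots> \<le> 1 / a\<^sup>2" using a by (intro divide_left_mono) (auto simp: power2_eq_square power3_eq_cube)
    finally show ?thesis unfolding u_def .
  qed
  have "\<bar>gg n j x\<bar> \<le> (\<bar>c * ((4 * real n + 2) / a ^ 3)\<bar> + \<bar>c * (- 2 / a\<^sup>2)\<bar> + \<bar>- (c * ((4 * real n + 2) / a ^ 3))\<bar>)
        + (\<bar>c * (2 / a)\<bar> + \<bar>c * (- 2 / a\<^sup>2)\<bar> + \<bar>0\<bar>) * x"
    unfolding gg_def a_def[symmetric] c_def[symmetric] by (rule Ef_bound[OF x])
  also have "\<dots> = (2 * (4 * real n + 2) * (c / a ^ 3) + 2 * (c / a\<^sup>2)) + (2 * (c / a) + 2 * (c / a\<^sup>2)) * x"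
  proof -
    have g0: "c * ((4 * real n + 2) / a ^ 3) \<ge> 0" using a c by simp
    have e0: "c * ((4 * real n + 2) / a ^ 3) = (4 * real n + 2) * (c / a ^ 3)" by simp
    have e1: "\<bar>c * ((4 * real n + 2) / a ^ 3)\<bar> = (4 * real n + 2) * (c / a ^ 3)"
      using g0 unfolding e0 by (simp only: abs_of_nonneg)
    have e2: "\<bar>- (c * ((4 * real n + 2) / a ^ 3))\<bar> = (4 * real n + 2) * (c / a ^ 3)"
      using e1 by (simp only: abs_minus_cancel)
    have e3: "\<bar>c * (- 2 / a\<^sup>2)\<bar> = 2 * (c / a\<^sup>2)" using a c by (simp add: abs_mult)
    have e4: "\<bar>c * (2 / a)\<bar> = 2 * (c / a)" using a c by (simp add: abs_mult)
    show ?thesis unfolding e1 e2 e3 e4 by simp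
  qed
  also have "\<dots> \<le> (2 * (4 * real n + 2) * u + 2 * u) + (2 * u + 2 * u) * x"
    using b1 b2 b3 x by (intro add_mono mult_left_mono mult_right_mono) auto
  also have "\<dots> \<le> ((8 * real n + 10) * u) + ((8 * real n + 10) * u) * x"
    using u0 x by (intro add_mono mult_right_mono) (auto simp: algebra_simps)
  also have "\<dots> = (8 * real n + 10) * u * (1 + x)" by (simp add: algebra_simps)
  also have "\<dots> \<le> (8 * real n + 10) * (1 / (real (Suc j))\<^sup>2) * (1 + x)"
    using u x by (intro mult_right_mono mult_left_mono) auto
  finally show ?thesis unfolding Bg_def by simp
qed

lemma gg_nonneg:
  assumes n: "n \<ge> 1" and x: "x \<ge> 0"
  shows "gg n j x \<ge> 0"
proof -
  define a where "a = aa j"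
  define c where "c = cc n j"
  define y where "y = a * x"
  have a: "a > 0" "a \<ge> 2 * pi" unfolding a_def using aa_ge by auto
  have c: "c > 0" unfolding c_def using cc_pos by auto
  have y: "y \<ge> 0" unfolding y_def using a x by simp
  have "gg n j x = c * (2 / a ^ 3) * (a * (y - sin y) - y * sin y + (2 * real n + 1) * (1 - cos y))"
    unfolding gg_def Ef_def a_def[symmetric] c_def[symmetric] y_def using a
    by (simp add: field_simps power2_eq_square power3_eq_cube)
  moreover have "0 \<le> a * (y - sin y) - y * sin y + (2 * real n + 1) * (1 - cos y)"
    using n by (intro core_ineq[OF y a(2)]) simp
  ultimately show ?thesis using a c by simp
qed

lemma deriv_system:
  fixes f :: "real \<Rightarrow> real" and D :: "nat \<Rightarrow> real \<Rightarrow> real"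
  assumes D0: "\<And>t. t > 0 \<Longrightarrow> D 0 t = f t"
    and DD: "\<And>m t. t > 0 \<Longrightarrow> (D m has_real_derivative D (Suc m) t) (at t)"
  shows "\<And>t. t > 0 \<Longrightarrow> (deriv ^^ m) f t = D m t"
    and "\<And>t. t > 0 \<Longrightarrow> ((deriv ^^ m) f has_real_derivative D (Suc m) t) (at t)"
proof -
  have transfer: "((deriv ^^ m) f has_real_derivative D (Suc m) t) (at t)"
    if eq: "\<And>t. t > 0 \<Longrightarrow> (deriv ^^ m) f t = D m t" and t: "t > 0" for m t
  proof -
    have ev: "eventually (\<lambda>s. (deriv ^^ m) f s = D m s) (nhds t)"
    proof -
      have "eventually (\<lambda>s. s \<in> {0<..}) (nhds t)" using t by (intro eventually_nhds_in_open) auto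
      then show ?thesis by eventually_elim (use eq in auto)
    qed
    show ?thesis using DD[OF t] by (subst DERIV_cong_ev[OF refl ev refl])
  qed
  have main: "\<And>t. t > 0 \<Longrightarrow> (deriv ^^ m) f t = D m t" for m
  proof (induction m)
    case 0
    then show ?case using D0 by simp
  next
    case (Suc m)
    have "((deriv ^^ m) f has_real_derivative D (Suc m) t) (at t)"
      using transfer[OF Suc.IH Suc.prems] by blast
    then show ?case by (simp add: DERIV_imp_deriv)
  qed
  show "\<And>t. t > 0 \<Longrightarrow> (deriv ^^ m) f t = D m t" by (rule main)
  show "\<And>t. t > 0 \<Longrightarrow> ((deriv ^^ m) f has_real_derivative D (Suc m) t) (at t)"
    by (rule transfer[OF main])
qed

definition Lk :: "nat \<Rightarrow> nat \<Rightarrow> nat \<Rightarrow> real \<Rightarrow> real" where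
  "Lk n m j t = Lap (\<lambda>x. x ^ m * gg n j x) t"

definition FF :: "nat \<Rightarrow> nat \<Rightarrow> real \<Rightarrow> real" where
  "FF n m t = (\<Sum>j. Lk n m j t)"

context
  fixes n :: nat
  assumes n: "n \<ge> 1"
begin

lemma gb: "\<And>x. x \<ge> 0 \<Longrightarrow> \<bar>gg n j x\<bar> \<le> Bg n j * (1 + x)"
  using gg_bound[OF n] by blast

lemma Lk_deriv: "t > 0 \<Longrightarrow> (Lk n m j has_real_derivative - Lk n (Suc m) j t) (at t)"
  unfolding Lk_def[abs_def] using Lap_deriv[OF gg_cont gb] by simp

lemma Lk_bnd_ex:
  assumes t0: "t0 > 0"
  shows "\<exists>M. summable M \<and> (\<forall>j t. t \<ge> t0 \<longrightarrow> \<bar>Lk n m j t\<bar> \<le> M j)"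
proof (intro exI conjI allI impI)
  show "summable (\<lambda>j. Bg n j * (Wc m t0 / (1 - exp (- (t0/2)))))"
    by (intro summable_mult2 Bg_summable)
  show "\<bar>Lk n m j t\<bar> \<le> Bg n j * (Wc m t0 / (1 - exp (- (t0/2))))" if "t0 \<le> t" for j t
    unfolding Lk_def by (rule Lap_bound[OF gg_cont gb t0 that])
qed

lemma Lk_summable:
  assumes t: "t > 0"
  shows "summable (\<lambda>j. Lk n m j t)"
proof -
  obtain M where M: "summable M" "\<And>j. \<bar>Lk n m j t\<bar> \<le> M j" using Lk_bnd_ex[OF t, of m] by auto
  show ?thesis by (rule summable_comparison_test[OF _ M(1)]) (use M(2) in auto)
qed

lemma FF_deriv:
  assumes t: "t > 0"
  shows "(FF n m has_real_derivative - FF n (Suc m) t) (at t)"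
proof -
  have "((\<lambda>x. \<Sum>j. Lk n m j x) has_real_derivative (\<Sum>j. - Lk n (Suc m) j t)) (at t)"
  proof (rule series_deriv[OF Lk_deriv _ _ t])
    show "\<exists>M. summable M \<and> (\<forall>i x. x \<ge> t0 \<longrightarrow> \<bar>Lk n m i x\<bar> \<le> M i)" if "t0 > 0" for t0
      using Lk_bnd_ex[OF that] .
    show "\<exists>M. summable M \<and> (\<forall>i x. x \<ge> t0 \<longrightarrow> \<bar>- Lk n (Suc m) i x\<bar> \<le> M i)" if "t0 > 0" for t0
      using Lk_bnd_ex[OF that, of "Suc m"] by simp
  qed
  moreover have "(\<Sum>j. - Lk n (Suc m) j t) = - FF n (Suc m) t"
    unfolding FF_def by (rule suminf_minus[OF Lk_summable[OF t]])
  moreover have "FF n m = (\<lambda>x. \<Sum>j. Lk n m j x)" unfolding FF_def[abs_def] ..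
  ultimately show ?thesis by simp
qed

lemma FF_nonneg:
  assumes t: "t > 0"
  shows "FF n m t \<ge> 0"
  unfolding FF_def
proof (rule suminf_nonneg[OF Lk_summable[OF t]])
  fix j show "0 \<le> Lk n m j t"
    unfolding Lk_def by (rule Lap_nonneg[OF gg_cont gb t gg_nonneg[OF n]])
qed

lemma FF0:
  assumes t: "t > 0"
  shows "FF n 0 t = p_fun n t"
proof -
  have L: "Lk n 0 j t = sm n t j / t\<^sup>2" for j
  proof -
    have "Lk n 0 j t = Lap (gg n j) t" unfolding Lk_def by simp
    also have "\<dots> = sm n t j / t\<^sup>2" unfolding Lap_def using Lap_gg[OF t] by (rule sums_unique[symmetric])
    finally show ?thesis .
  qed
  have s1: "summable (\<lambda>j. sm n t j / t\<^sup>2)" using Lk_summable[OF t, of 0] unfolding L .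
  have s2: "summable (\<lambda>j. sm n t j)"
  proof -
    have "summable (\<lambda>j. t\<^sup>2 * (sm n t j / t\<^sup>2))" by (rule summable_mult[OF s1])
    then show ?thesis using t by simp
  qed
  have "FF n 0 t = (\<Sum>j. sm n t j / t\<^sup>2)" unfolding FF_def L ..
  also have "\<dots> = (\<Sum>j. sm n t j) / t\<^sup>2" by (rule suminf_divide[OF s2])
  also have "\<dots> = p_fun n t" unfolding p_fun_sm by simp
  finally show ?thesis .
qed

end

theorem proposition5p1:
  fixes n :: nat
  assumes "n \<ge> 1"
  shows "completely_monotonic (p_fun n)"
proof -
  define D where "D m t = (-1) ^ m * FF n m t" for m t
  have D0: "D 0 t = p_fun n t" if "t > 0" for t unfolding D_def using FF0[OF assms that] by simp
  have DD: "(D m has_real_derivative D (Suc m) t) (at t)" if "t > 0" for m t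
  proof -
    have "((\<lambda>t. (-1) ^ m * FF n m t) has_real_derivative (-1) ^ m * (- FF n (Suc m) t)) (at t)"
      by (intro DERIV_cmult FF_deriv[OF assms that])
    then show ?thesis unfolding D_def[abs_def] by simp
  qed
  have sys1: "(deriv ^^ m) (p_fun n) t = D m t" if "t > 0" for m t
    by (rule deriv_system(1)[where D=D and f="p_fun n"]) (auto intro: D0 DD that)
  have sys2: "((deriv ^^ m) (p_fun n) has_real_derivative D (Suc m) t) (at t)" if "t > 0" for m t
    by (rule deriv_system(2)[where D=D and f="p_fun n"]) (auto intro: D0 DD that)
  show ?thesis
    unfolding completely_monotonic_def
  proof (intro conjI allI impI)
    fix m :: nat and t :: real assume t: "t > 0"
    show "(deriv ^^ m) (p_fun n) differentiable (at t)"
      using sys2[OF t] unfolding real_differentiable_def by blast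
    have "(-1) ^ m * (deriv ^^ m) (p_fun n) t = FF n m t"
      unfolding sys1[OF t] D_def by (simp flip: power_mult_distrib)
    then show "(-1) ^ m * (deriv ^^ m) (p_fun n) t \<ge> 0" using FF_nonneg[OF assms t] by simp
  qed
qed

end
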